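(* In the quantum switch model of the context (with $W=\infty$), assume in addition that the request processes $\{A_{ij}(t):t\ge0\}$, $i,j\in\mathcal K$, are mutually independent Bernoulli processes. If $(\lambda_{ij}+\epsilon)_{i,j\in\mathcal K}\in\Lambda$ for some $\epsilon>0$, then under the stationary protocol $\pi_{\mathrm{STAT}}$ all requests are served in one time slot on average, i.e. the long-run average latency of requests (number of slots from the slot of a request's arrival until it is addressed) is one slot, the minimum possible since a request arriving in slot $t$ can be addressed no earlier than slot $t+1$.
   Context: Quantum switch model. There are $K$ end nodes $\mathcal K=\{1,\dots,K\}$ and a switch (node $0$); time is slotted, $t=0,1,2,\dots$; pair-indexed quantities are symmetric in $(i,j)$. In slot $t$: (i) $C_{0i}(t)\in\{0,1\}$ EPR pairs are generated between the switch and node $i$, where $\{C_{0i}(t)\}_{t\ge0}$ are mutually independent Bernoulli processes (i.i.d. in $t$) with mean $p_i$. (ii) The switch chooses nonnegative integers $F_{ij}(t)=F_{ji}(t)$ (entanglement swaps for pair $(i,j)$, each consuming one stored switch–$i$ and one stored switch–$j$ pair) with $\sum_iF_{ij}(t)\le E_{0j}(t)$; no limit on swaps per slot ($W=\infty$); each swap succeeds independently with probability $q$; $R_{ij}(t)$ is the number of successes. (iii) $A_{ij}(t)$ new requests for pair $(i,j)$ arrive, with rate $\lambda_{ij}=\mathbb E[A_{ij}(t)]$. Dynamics: $U_{ij}(t+1)=[U_{ij}(t)-E_{ij}(t)-R_{ij}(t)]^++A_{ij}(t)$, $E_{ij}(t+1)=[E_{ij}(t)+R_{ij}(t)-U_{ij}(t)]^+$,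 $E_{0i}(t+1)=E_{0i}(t)-\sum_jF_{ij}(t)+C_{0i}(t)$, with zero initial values; $U_{ij}$ = pending requests, $E_{ij}$ = stored $i$–$j$ pairs, $E_{0i}$ = stored switch–$i$ pairs; memory unlimited, no decoherence. $\Lambda$ is the set of nonnegative matrices $(\lambda_{ij})$ for which there exist nonnegative $f_{ij}=f_{ji}$ with $\sum_if_{ij}\le p_j$ for all $j$ and $\lambda_{ij}\le qf_{ij}$ for all $i,j$. Stationary protocol $\pi_{\mathrm{STAT}}$: with $\epsilon$ as in the claim, fix $\tilde f_{ij}=\tilde f_{ji}\ge0$ with $\sum_i\tilde f_{ij}\le p_j$ and $\lambda_{ij}+\epsilon\le q\tilde f_{ij}$ (e.g. $\tilde f_{ij}=(\lambda_{ij}+\epsilon)/q$). Each switch–$i$ pair generated in any slot is, independently, labelled $(i,j)$ with probability $\tilde f_{ij}/p_i$. Let $\mathcal M^i_{ij}(t)$ be the set of switch–$i$ pairs labelled $(i,j)$ not consumed up to slot $t$; whenever $\mathcal M^i_{ij}(t)$ and $\mathcal M^j_{ij}(t)$ are both nonempty, the switch performs swaps for pair $(i,j)$ consuming one pair from each until one of them is empty. *)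

theory Defs
  imports "HOL-Probability.Probability"
begin

text \<open>End nodes are 1..K; the switch is node 0 (not an index here).
  All randomness of the model is collected in one family of nat-valued random
  variables indexed by rv_idx:
   Gen i t      : C_{0i}(t) in {0,1}
   Label i t    : label of the switch-i pair generated in slot t; value j means
                  label (i,j); any value outside K-{i} means unlabelled (never used)
   Req i j t    : A_{ij}(t) in {0,1}        (canonical index i < j)
   Swp i j t n  : success (1) / failure (0) of the n-th swap for pair (i,j) in
                  slot t                    (canonical index i < j)\<close>

datatype rv_idx = Gen nat nat | Label nat nat | Req nat nat nat | Swp nat nat nat nat

definition nodes :: "nat \<Rightarrow> nat set" where
  "nodes K = {1..K}"

definition node_pairs :: "nat \<Rightarrow> (nat \<times> nat) set" where
  "node_pairs K = {(i, j). i \<in> nodes K \<and> j \<in> nodes K \<and> i < j}"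

definition in_Lambda :: "nat \<Rightarrow> (nat \<Rightarrow> real) \<Rightarrow> real \<Rightarrow> (nat \<Rightarrow> nat \<Rightarrow> real) \<Rightarrow> bool" where
  "in_Lambda K p q lam \<longleftrightarrow>
     (\<forall>i\<in>nodes K. \<forall>j\<in>nodes K. i \<noteq> j \<longrightarrow> lam i j \<ge> 0) \<and>
     (\<exists>f :: nat \<Rightarrow> nat \<Rightarrow> real.
        (\<forall>i j. f i j = f j i \<and> f i j \<ge> 0) \<and>
        (\<forall>j\<in>nodes K. (\<Sum>i\<in>nodes K - {j}. f i j) \<le> p j) \<and>
        (\<forall>i\<in>nodes K. \<forall>j\<in>nodes K. i \<noteq> j \<longrightarrow> lam i j \<le> q * f i j))"

text \<open>Number of stored switch-i pairs labelled (i,j), not consumed before slot t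
  (i.e. |M^i_{ij}(t)|).  In slot t the switch performs min(|M^i_{ij}(t)|,|M^j_{ij}(t)|)
  swaps for (i,j); pairs generated in slot t are available from slot t+1 on.\<close>
fun stat_mem :: "(rv_idx \<Rightarrow> nat) \<Rightarrow> nat \<Rightarrow> nat \<Rightarrow> nat \<Rightarrow> nat" where
  "stat_mem x i j 0 = 0"
| "stat_mem x i j (Suc t) =
     stat_mem x i j t - min (stat_mem x i j t) (stat_mem x j i t)
     + (if x (Gen i t) = 1 \<and> x (Label i t) = j then 1 else 0)"

definition stat_F :: "(rv_idx \<Rightarrow> nat) \<Rightarrow> nat \<Rightarrow> nat \<Rightarrow> nat \<Rightarrow> nat" where
  "stat_F x i j t = min (stat_mem x i j t) (stat_mem x j i t)"

definition stat_R :: "(rv_idx \<Rightarrow> nat) \<Rightarrow> nat \<Rightarrow> nat \<Rightarrow> nat \<Rightarrow> nat" where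
  "stat_R x i j t = card {n. n < stat_F x i j t \<and> x (Swp (min i j) (max i j) t n) = 1}"

definition req_A :: "(rv_idx \<Rightarrow> nat) \<Rightarrow> nat \<Rightarrow> nat \<Rightarrow> nat \<Rightarrow> nat" where
  "req_A x i j t = x (Req (min i j) (max i j) t)"

text \<open>(U_{ij}(t), E_{ij}(t)); nat subtraction realises [.]^+.\<close>
fun stat_UE :: "(rv_idx \<Rightarrow> nat) \<Rightarrow> nat \<Rightarrow> nat \<Rightarrow> nat \<Rightarrow> nat \<times> nat" where
  "stat_UE x i j 0 = (0, 0)"
| "stat_UE x i j (Suc t) =
     (let u = fst (stat_UE x i j t); e = snd (stat_UE x i j t); r = stat_R x i j t
      in (u - e - r + req_A x i j t, e + r - u))"

text \<open>Average latency of requests over the horizon [0,T): total number of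
  request-slots spent pending (a request arriving in slot t and addressed in slot s
  is pending in slots t+1..s, i.e. contributes its latency s - t), divided by the
  number of requests that arrived.\<close>
definition avg_latency :: "nat \<Rightarrow> (rv_idx \<Rightarrow> nat) \<Rightarrow> nat \<Rightarrow> real" where
  "avg_latency K x T =
     real (\<Sum>t<T. \<Sum>(i, j)\<in>node_pairs K. fst (stat_UE x i j t))
     / real (\<Sum>t<T. \<Sum>(i, j)\<in>node_pairs K. req_A x i j t)"

definition rv_index :: "nat \<Rightarrow> rv_idx set" where
  "rv_index K = {Gen i t | i t. i \<in> nodes K} \<union> {Label i t | i t. i \<in> nodes K}
     \<union> {Req i j t | i j t. (i, j) \<in> node_pairs K}
     \<union> {Swp i j t n | i j t n. (i, j) \<in> node_pairs K}"

end

theory Submission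
  imports Defs
begin

definition gI :: "(rv_idx \<Rightarrow> nat) \<Rightarrow> nat \<Rightarrow> nat \<Rightarrow> nat \<Rightarrow> nat" where
  "gI x i j s = (if x (Gen i s) = 1 \<and> x (Label i s) = j then 1 else 0)"

definition NN :: "(rv_idx \<Rightarrow> nat) \<Rightarrow> nat \<Rightarrow> nat \<Rightarrow> nat \<Rightarrow> nat" where
  "NN x i j t = (\<Sum>s<t. gI x i j s)"

definition SS :: "(rv_idx \<Rightarrow> nat) \<Rightarrow> nat \<Rightarrow> nat \<Rightarrow> nat \<Rightarrow> nat" where
  "SS x i j t = (case t of 0 \<Rightarrow> 0 | Suc t' \<Rightarrow> min (NN x i j t') (NN x j i t'))"

lemma gI_le1: "gI x i j s \<le> 1" by (simp add: gI_def)

lemma NN_Suc: "NN x i j (Suc t) = NN x i j t + gI x i j t"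
  by (simp add: NN_def)

lemma NN_mono: "s \<le> t \<Longrightarrow> NN x i j s \<le> NN x i j t"
  unfolding NN_def by (rule sum_mono2) auto

lemma SS_sym: "SS x i j t = SS x j i t"
  by (simp add: SS_def min.commute split: nat.split)

lemma SS_le: "SS x i j t \<le> NN x i j t"
proof (cases t)
  case (Suc t') then show ?thesis
    using NN_mono[of t' t x i j] by (simp add: SS_def)
qed (simp add: SS_def)

lemma stat_mem_eq: "stat_mem x i j t = NN x i j t - SS x i j t"
proof (induction t arbitrary: i j)
  case 0 then show ?case by (simp add: NN_def SS_def)
next
  case (Suc t)
  have a: "stat_mem x i j t = NN x i j t - SS x i j t" and b: "stat_mem x j i t = NN x j i t - SS x i j t"
    using Suc.IH[of i j] Suc.IH[of j i] SS_sym by auto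
  have m1: "SS x i j t \<le> NN x i j t" and m2: "SS x i j t \<le> NN x j i t"
    using SS_le[of x i j t] SS_le[of x j i t] SS_sym by auto
  have "stat_mem x i j (Suc t) = NN x i j t - min (NN x i j t) (NN x j i t) + gI x i j t"
    using a b m1 m2 by (simp add: gI_def)
  also have "\<dots> = NN x i j (Suc t) - SS x i j (Suc t)"
    by (simp add: NN_Suc SS_def)
  finally show ?case .
qed

lemma stat_F_eq: "stat_F x i j t = SS x i j (Suc t) - SS x i j t"
proof -
  have m1: "SS x i j t \<le> NN x i j t" and m2: "SS x i j t \<le> NN x j i t"
    using SS_le[of x i j t] SS_le[of x j i t] SS_sym by auto
  show ?thesis
    unfolding stat_F_def stat_mem_eq using m1 m2 SS_sym[of x j i t]
    by (simp add: SS_def)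
qed

lemma SS_mono_Suc: "SS x i j t \<le> SS x i j (Suc t)"
  by (cases t) (auto simp: SS_def NN_Suc intro: min.mono)

lemma stat_F_le1: "stat_F x i j t \<le> 1"
proof (cases t)
  case 0 then show ?thesis by (simp add: stat_F_eq SS_def NN_def)
next
  case (Suc t')
  have "gI x i j t' \<le> 1" "gI x j i t' \<le> 1" by (rule gI_le1)+
  then show ?thesis unfolding stat_F_eq Suc SS_def by (simp add: NN_Suc)
qed

lemma sum_stat_F: "(\<Sum>s<t. stat_F x i j s) = SS x i j t"
proof (induction t)
  case 0 then show ?case by (simp add: SS_def)
next
  case (Suc t) then show ?case using SS_mono_Suc[of x i j t] by (simp add: stat_F_eq)
qed

lemma stat_R_eq: assumes "i < j"
  shows "stat_R x i j t = (if stat_F x i j t = 1 \<and> x (Swp i j t 0) = 1 then 1 else 0)"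
proof -
  have "stat_F x i j t = 0 \<or> stat_F x i j t = 1" using stat_F_le1[of x i j t] by auto
  then show ?thesis
  proof
    assume "stat_F x i j t = 0" then show ?thesis by (simp add: stat_R_def)
  next
    assume h: "stat_F x i j t = 1"
    have "{n. n < 1 \<and> x (Swp i j t n) = 1} = (if x (Swp i j t 0) = 1 then {0} else {})" by auto
    then show ?thesis using h assms by (simp add: stat_R_def)
  qed
qed

definition cumR where "cumR x i j t = (\<Sum>s<t. stat_R x i j s)"
definition cumA where "cumA x i j t = (\<Sum>s<t. req_A x i j s)"

lemma UE_inv: "int (snd (stat_UE x i j t)) - int (fst (stat_UE x i j t)) = int (cumR x i j t) - int (cumA x i j t)"
proof (induction t)
  case 0 then show ?case by (simp add: cumR_def cumA_def)
next
  case (Suc t) then show ?case by (simp add: Let_def cumR_def cumA_def)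
qed

lemma UE_fst: "fst (stat_UE x i j (Suc t)) = nat (int (cumA x i j t) - int (cumR x i j (Suc t))) + req_A x i j t"
  using UE_inv[of x i j t] by (simp add: Let_def cumR_def)

lemma UE_fst_good: "cumA x i j t \<le> cumR x i j (Suc t) \<Longrightarrow> fst (stat_UE x i j (Suc t)) = req_A x i j t"
  using UE_fst[of x i j t] by simp

lemma final_limit:
  fixes u a :: "nat \<Rightarrow> nat" and B :: real
  assumes ua: "\<And>t. t \<ge> T0 \<Longrightarrow> u (Suc t) = a t"
    and aB: "\<And>t. real (a t) \<le> B"
    and D: "filterlim (\<lambda>T. real (\<Sum>t<T. a t)) at_top sequentially"
  shows "(\<lambda>T. real (\<Sum>t<T. u t) / real (\<Sum>t<T. a t)) \<longlonglongrightarrow> 1"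
proof -
  define Nm where "Nm T = real (\<Sum>t<T. u t)" for T
  define Dn where "Dn T = real (\<Sum>t<T. a t)" for T
  define c where "c = Nm (Suc T0) - Dn (Suc T0) + real (a T0)"
  have key: "Nm (Suc T0 + n) = c + Dn (Suc T0 + n) - real (a (T0 + n))" for n
  proof (induction n)
    case 0 then show ?case by (simp add: c_def)
  next
    case (Suc n)
    have "Nm (Suc T0 + Suc n) = Nm (Suc T0 + n) + real (u (Suc (T0 + n)))"
      by (simp add: Nm_def)
    also have "u (Suc (T0 + n)) = a (T0 + n)" using ua by simp
    finally show ?case using Suc by (simp add: Dn_def)
  qed
  have B0: "0 \<le> B" using aB[of 0] by simp
  have Dinf: "filterlim Dn at_infinity sequentially"
    using D filterlim_at_top_imp_at_infinity unfolding Dn_def by blast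
  have z: "(\<lambda>T. (\<bar>c\<bar> + B) / Dn T) \<longlonglongrightarrow> 0"
    by (rule tendsto_divide_0[OF tendsto_const Dinf])
  have ev: "eventually (\<lambda>T. Nm T / Dn T = 1 + (c - real (a (T - 1))) / Dn T \<and> 
         norm ((c - real (a (T - 1))) / Dn T) \<le> (\<bar>c\<bar> + B) / Dn T) sequentially"
  proof -
    have "eventually (\<lambda>T. Dn T > 0) sequentially"
      using D unfolding Dn_def filterlim_at_top_dense by auto
    moreover have "eventually (\<lambda>T. T \<ge> Suc T0) sequentially" by (rule eventually_ge_at_top)
    ultimately show ?thesis
    proof eventually_elim
      case (elim T)
      then obtain n where n: "T = Suc T0 + n" by (metis le_add_diff_inverse)
      then have "Nm T = c + Dn T - real (a (T - 1))" using key by simp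
      moreover have "\<bar>c - real (a (T - 1))\<bar> \<le> \<bar>c\<bar> + B" using aB[of "T-1"] by simp
      moreover have "Dn T > 0" using elim by simp
      moreover have "norm ((c - real (a (T - 1))) / Dn T) \<le> (\<bar>c\<bar> + B) / Dn T"
        using \<open>\<bar>c - real (a (T - 1))\<bar> \<le> \<bar>c\<bar> + B\<close> \<open>Dn T > 0\<close>
        by (simp add: abs_divide divide_right_mono)
      ultimately show ?case
        by (simp add: diff_divide_distrib add_divide_distrib)
    qed
  qed
  have "(\<lambda>T. (c - real (a (T - 1))) / Dn T) \<longlonglongrightarrow> 0"
    by (rule Lim_null_comparison[OF eventually_mono[OF ev] z]) auto
  then have "(\<lambda>T. 1 + (c - real (a (T - 1))) / Dn T) \<longlonglongrightarrow> 1 + 0"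
    by (intro tendsto_add tendsto_const)
  moreover have "eventually (\<lambda>T. 1 + (c - real (a (T - 1))) / Dn T = Nm T / Dn T) sequentially"
    using ev by (rule eventually_mono) simp
  ultimately have "(\<lambda>T. Nm T / Dn T) \<longlonglongrightarrow> 1"
    by (simp add: Lim_transform_eventually)
  then show ?thesis unfolding Nm_def Dn_def .
qed

lemma pi_count_meas:
  fixes A :: "'i set"
  assumes fin: "finite A" and f: "f \<in> space (PiM A (\<lambda>_. count_space (UNIV::nat set))) \<rightarrow> space N"
  shows "f \<in> measurable (PiM A (\<lambda>_. count_space (UNIV::nat set))) N"
proof (rule measurableI)
  let ?P = "PiM A (\<lambda>_. count_space (UNIV::nat set))"
  show "x \<in> space ?P \<Longrightarrow> f x \<in> space N" for x using f by auto
  have all: "T \<in> sets ?P" if T: "T \<subseteq> space ?P" for T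
  proof -
    have sp: "space ?P = PiE A (\<lambda>_. UNIV)" by (simp add: space_PiM)
    have cnt: "countable T"
      using countable_subset[OF T[unfolded sp] countable_PiE[OF fin]] by auto
    have "T = (\<Union>g\<in>T. PiE A (\<lambda>i. {g i}))"
    proof (intro equalityI subsetI)
      fix g assume g: "g \<in> T"
      then have "g \<in> PiE A (\<lambda>_. UNIV)" using T sp by auto
      then have "g \<in> PiE A (\<lambda>i. {g i})" by (auto simp: PiE_iff)
      then show "g \<in> (\<Union>g\<in>T. PiE A (\<lambda>i. {g i}))" using g by auto
    next
      fix h assume "h \<in> (\<Union>g\<in>T. PiE A (\<lambda>i. {g i}))"
      then obtain g where g: "g \<in> T" "h \<in> PiE A (\<lambda>i. {g i})" by auto
      have "g \<in> PiE A (\<lambda>_. UNIV)" using g(1) T sp by auto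
      then have "h = g" using g(2) by (auto simp: PiE_iff extensional_def fun_eq_iff)
      then show "h \<in> T" using g by simp
    qed
    also have "\<dots> \<in> sets ?P"
      by (intro sets.countable_UN'' cnt sets_PiM_I_finite fin) auto
    finally show ?thesis .
  qed
  fix S assume "S \<in> sets N"
  show "f -` S \<inter> space ?P \<in> sets ?P" by (rule all) auto
qed

context prob_space begin

lemma meas_dep:
  assumes fin: "finite A" and X: "\<And>k. k \<in> A \<Longrightarrow> X k \<in> measurable M (count_space (UNIV::nat set))"
    and dep: "\<And>x. \<Phi> (restrict x A) = \<Phi> x" and sp: "\<And>x. \<Phi> x \<in> space N"
  shows "(\<lambda>\<omega>. \<Phi> (\<lambda>k. X k \<omega>)) \<in> measurable M N"
proof -
  have "(\<lambda>\<omega>. \<Phi> (\<lambda>k. X k \<omega>)) = \<Phi> \<circ> (\<lambda>\<omega>. restrict (\<lambda>k. X k \<omega>) A)"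
    using dep by (simp add: fun_eq_iff)
  also have "\<dots> \<in> measurable M N"
    by (intro measurable_comp[OF measurable_restrict pi_count_meas] X fin) (auto simp: sp)
  finally show ?thesis .
qed

lemma event_dep:
  assumes fin: "finite A" and X: "\<And>k. k \<in> A \<Longrightarrow> X k \<in> measurable M (count_space (UNIV::nat set))"
    and dep: "\<And>x. P (restrict x A) = P x"
  shows "{\<omega>\<in>space M. P (\<lambda>k. X k \<omega>)} \<in> events"
proof -
  have m: "(\<lambda>\<omega>. P (\<lambda>k. X k \<omega>)) \<in> measurable M (count_space UNIV)"
    using meas_dep[of A X P "count_space UNIV"] fin X dep by auto
  have "{\<omega>\<in>space M. P (\<lambda>k. X k \<omega>)} = (\<lambda>\<omega>. P (\<lambda>k. X k \<omega>)) -` {True} \<inter> space M" by auto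
  also have "\<dots> \<in> events" by (rule measurable_sets[OF m]) auto
  finally show ?thesis .
qed

lemma indep_two:
  assumes ind: "indep_vars (\<lambda>_. count_space (UNIV::nat set)) X I"
    and AB: "A \<subseteq> I" "B \<subseteq> I" "A \<inter> B = {}" and fin: "finite A" "finite B"
    and dP: "\<And>x. P (restrict x A) = P x" and dQ: "\<And>x. Q (restrict x B) = Q x"
  shows "prob {\<omega>\<in>space M. P (\<lambda>k. X k \<omega>) \<and> Q (\<lambda>k. X k \<omega>)} =
         prob {\<omega>\<in>space M. P (\<lambda>k. X k \<omega>)} * prob {\<omega>\<in>space M. Q (\<lambda>k. X k \<omega>)}"
proof -
  have eP: "\<And>\<omega>. (P \<circ> (\<lambda>\<omega>. restrict (\<lambda>i. X i \<omega>) A)) \<omega> = P (\<lambda>k. X k \<omega>)"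
    using dP by simp
  have eQ: "\<And>\<omega>. (Q \<circ> (\<lambda>\<omega>. restrict (\<lambda>i. X i \<omega>) B)) \<omega> = Q (\<lambda>k. X k \<omega>)"
    using dQ by simp
  have iv: "indep_var (PiM A (\<lambda>_. count_space UNIV)) (\<lambda>\<omega>. restrict (\<lambda>i. X i \<omega>) A)
                      (PiM B (\<lambda>_. count_space UNIV)) (\<lambda>\<omega>. restrict (\<lambda>i. X i \<omega>) B)"
    by (rule indep_var_restrict[OF ind AB(3,1,2)])
  have iv2: "indep_var (count_space UNIV) (P \<circ> (\<lambda>\<omega>. restrict (\<lambda>i. X i \<omega>) A))
                       (count_space UNIV) (Q \<circ> (\<lambda>\<omega>. restrict (\<lambda>i. X i \<omega>) B))"
    by (rule indep_var_compose[OF iv pi_count_meas[OF fin(1)] pi_count_meas[OF fin(2)]]) auto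
  have "prob ((\<lambda>x. ((P \<circ> (\<lambda>\<omega>. restrict (\<lambda>i. X i \<omega>) A)) x, (Q \<circ> (\<lambda>\<omega>. restrict (\<lambda>i. X i \<omega>) B)) x)) -` ({True} \<times> {True}) \<inter> space M)
    = prob ((P \<circ> (\<lambda>\<omega>. restrict (\<lambda>i. X i \<omega>) A)) -` {True} \<inter> space M) * prob ((Q \<circ> (\<lambda>\<omega>. restrict (\<lambda>i. X i \<omega>) B)) -` {True} \<inter> space M)"
    by (rule indep_varD[OF iv2]) simp_all
  moreover have "(\<lambda>x. ((P \<circ> (\<lambda>\<omega>. restrict (\<lambda>i. X i \<omega>) A)) x, (Q \<circ> (\<lambda>\<omega>. restrict (\<lambda>i. X i \<omega>) B)) x)) -` ({True} \<times> {True}) \<inter> space M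
     = {\<omega>\<in>space M. P (\<lambda>k. X k \<omega>) \<and> Q (\<lambda>k. X k \<omega>)}"
    unfolding vimage_def eP eQ by auto
  moreover have "(P \<circ> (\<lambda>\<omega>. restrict (\<lambda>i. X i \<omega>) A)) -` {True} \<inter> space M = {\<omega>\<in>space M. P (\<lambda>k. X k \<omega>)}"
    unfolding vimage_def eP by auto
  moreover have "(Q \<circ> (\<lambda>\<omega>. restrict (\<lambda>i. X i \<omega>) B)) -` {True} \<inter> space M = {\<omega>\<in>space M. Q (\<lambda>k. X k \<omega>)}"
    unfolding vimage_def eQ by auto
  ultimately show ?thesis by simp
qed

lemma indep_family:
  assumes ind: "indep_vars (\<lambda>_. count_space (UNIV::nat set)) X I"
    and K: "\<And>s. s \<in> L \<Longrightarrow> K s \<subseteq> I" and fin: "\<And>s. s \<in> L \<Longrightarrow> finite (K s)"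
    and disj: "disjoint_family_on K L"
    and dep: "\<And>s x. s \<in> L \<Longrightarrow> \<Phi> s (restrict x (K s)) = \<Phi> s x"
  shows "indep_vars (\<lambda>_. borel) (\<lambda>s \<omega>. \<Phi> s (\<lambda>k. X k \<omega>) :: real) L"
proof -
  have iv: "indep_vars (\<lambda>j. PiM (K j) (\<lambda>_. count_space UNIV)) (\<lambda>j \<omega>. restrict (\<lambda>i. X i \<omega>) (K j)) L"
    by (rule indep_vars_restrict[OF ind K disj])
  have "indep_vars (\<lambda>_. borel) (\<lambda>s \<omega>. \<Phi> s (restrict (\<lambda>i. X i \<omega>) (K s))) L"
    by (rule indep_vars_compose2[OF iv pi_count_meas[OF fin]]) auto
  also have "?this \<longleftrightarrow> ?thesis"
    by (intro indep_vars_cong) (auto simp: fun_eq_iff dep)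
  finally show ?thesis .
qed

lemma hoeff_low:
  fixes Y :: "'i \<Rightarrow> 'a \<Rightarrow> real"
  assumes fin: "finite I" and ind: "indep_vars (\<lambda>_. borel) Y I"
    and bnd: "\<And>i \<omega>. i \<in> I \<Longrightarrow> Y i \<omega> \<in> {0..1}"
    and ex: "\<And>i. i \<in> I \<Longrightarrow> m \<le> expectation (Y i)" and d: "0 \<le> d"
  shows "prob {\<omega>\<in>space M. (\<Sum>i\<in>I. Y i \<omega>) \<le> m * card I - d} \<le> exp (-2 * d\<^sup>2 / card I)"
proof (cases "I = {}")
  case True then show ?thesis by simp
next
  case False
  define \<mu> where "\<mu> = (\<Sum>i\<in>I. expectation (Y i))"
  interpret H: Hoeffding_ineq M I Y "\<lambda>_. 0" "\<lambda>_. 1" \<mu>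
  proof unfold_locales
    show "finite I" by (rule fin)
    show "indep_vars (\<lambda>_. borel) Y I" by (rule ind)
    fix i assume "i \<in> I"
    then show "AE x in M. Y i x \<in> {0..1}" using bnd by simp
  qed (simp add: \<mu>_def)
  have cpos: "card I > 0" using False fin by (simp add: card_gt_0_iff)
  have "m * card I \<le> \<mu>"
    using sum_mono[of I "\<lambda>_. m" "\<lambda>i. expectation (Y i)"] ex by (simp add: \<mu>_def mult.commute)
  define \<epsilon> where "\<epsilon> = d + (\<mu> - m * card I)"
  have e: "\<epsilon> \<ge> d" using \<open>m * card I \<le> \<mu>\<close> by (simp add: \<epsilon>_def)
  have "prob {\<omega>\<in>space M. (\<Sum>i\<in>I. Y i \<omega>) \<le> m * card I - d} = prob {\<omega>\<in>space M. (\<Sum>i\<in>I. Y i \<omega>) \<le> \<mu> - \<epsilon>}"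
    by (simp add: \<epsilon>_def)
  also have "\<dots> \<le> exp (-2 * \<epsilon>\<^sup>2 / (\<Sum>i\<in>I. (1 - 0)\<^sup>2))"
    using H.Hoeffding_ineq_le[of \<epsilon>] e d cpos by simp
  also have "\<dots> \<le> exp (-2 * d\<^sup>2 / card I)"
  proof -
    have "d\<^sup>2 \<le> \<epsilon>\<^sup>2" using e d by (intro power_mono) auto
    then show ?thesis using cpos by (simp add: divide_right_mono)
  qed
  finally show ?thesis .
qed

lemma hoeff_up:
  fixes Y :: "'i \<Rightarrow> 'a \<Rightarrow> real"
  assumes fin: "finite I" and ind: "indep_vars (\<lambda>_. borel) Y I"
    and bnd: "\<And>i \<omega>. i \<in> I \<Longrightarrow> Y i \<omega> \<in> {0..1}"
    and ex: "\<And>i. i \<in> I \<Longrightarrow> expectation (Y i) \<le> m" and d: "0 \<le> d"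
  shows "prob {\<omega>\<in>space M. (\<Sum>i\<in>I. Y i \<omega>) \<ge> m * card I + d} \<le> exp (-2 * d\<^sup>2 / card I)"
proof (cases "I = {}")
  case True then show ?thesis by simp
next
  case False
  define \<mu> where "\<mu> = (\<Sum>i\<in>I. expectation (Y i))"
  interpret H: Hoeffding_ineq M I Y "\<lambda>_. 0" "\<lambda>_. 1" \<mu>
  proof unfold_locales
    show "finite I" by (rule fin)
    show "indep_vars (\<lambda>_. borel) Y I" by (rule ind)
    fix i assume "i \<in> I"
    then show "AE x in M. Y i x \<in> {0..1}" using bnd by simp
  qed (simp add: \<mu>_def)
  have cpos: "card I > 0" using False fin by (simp add: card_gt_0_iff)
  have "\<mu> \<le> m * card I"
    using sum_mono[of I "\<lambda>i. expectation (Y i)" "\<lambda>_. m"] ex by (simp add: \<mu>_def mult.commute)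
  define \<epsilon> where "\<epsilon> = d + (m * card I - \<mu>)"
  have e: "\<epsilon> \<ge> d" using \<open>\<mu> \<le> m * card I\<close> by (simp add: \<epsilon>_def)
  have "prob {\<omega>\<in>space M. (\<Sum>i\<in>I. Y i \<omega>) \<ge> m * card I + d} = prob {\<omega>\<in>space M. (\<Sum>i\<in>I. Y i \<omega>) \<ge> \<mu> + \<epsilon>}"
    by (simp add: \<epsilon>_def algebra_simps)
  also have "\<dots> \<le> exp (-2 * \<epsilon>\<^sup>2 / (\<Sum>i\<in>I. (1 - 0)\<^sup>2))"
    using H.Hoeffding_ineq_ge[of \<epsilon>] e d cpos by simp
  also have "\<dots> \<le> exp (-2 * d\<^sup>2 / card I)"
  proof -
    have "d\<^sup>2 \<le> \<epsilon>\<^sup>2" using e d by (intro power_mono) auto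
    then show ?thesis using cpos by (simp add: divide_right_mono)
  qed
  finally show ?thesis .
qed

lemma bc_exp:
  assumes B: "\<And>t. B t \<in> events" and c: "c > 0" and bnd: "\<And>t. prob (B t) \<le> C * exp (- c * real t)"
  shows "AE \<omega> in M. eventually (\<lambda>t. \<omega> \<notin> B t) sequentially"
proof -
  have g: "summable (\<lambda>t. C * exp (- c) ^ t)"
    using c by (intro summable_mult summable_geometric) simp
  have sm: "summable (\<lambda>t. measure M (B t))"
  proof (rule summable_comparison_test[OF _ g])
    show "\<exists>N. \<forall>n\<ge>N. norm (measure M (B n)) \<le> C * exp (- c) ^ n"
      using bnd by (auto simp: exp_of_nat_mult[symmetric] mult.commute)
  qed
  have fi: "\<And>n. emeasure M (B n) < \<infinity>"
    by (simp add: emeasure_eq_measure)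
  have "AE x in M. eventually (\<lambda>n. x \<in> space M - B n) sequentially"
    by (rule borel_cantelli_AE1[OF B fi sm])
  then show ?thesis by (auto elim: eventually_mono)
qed

lemma exp_ind:
  assumes "{\<omega>\<in>space M. P \<omega>} \<in> events"
  shows "expectation (\<lambda>\<omega>. if P \<omega> then 1 else 0 :: real) = prob {\<omega>\<in>space M. P \<omega>}"
proof -
  have "expectation (\<lambda>\<omega>. if P \<omega> then 1 else 0 :: real) = expectation (indicator {\<omega>\<in>space M. P \<omega>})"
    by (intro Bochner_Integration.integral_cong) (auto simp: indicator_def)
  also have "\<dots> = prob {\<omega>\<in>space M. P \<omega>}" using assms by simp
  finally show ?thesis .
qed

lemma exp_bound_eq: "exp (-2 * (\<delta> * real t)\<^sup>2 / real (card {..<t})) = exp (- (2 * \<delta>\<^sup>2) * real t)"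
  by (cases "t = 0") (auto simp: power2_eq_square)

lemma hbc_low:
  fixes \<Phi> :: "nat \<Rightarrow> ('i \<Rightarrow> nat) \<Rightarrow> real" and m \<delta> :: real
  assumes ind: "indep_vars (\<lambda>_. count_space (UNIV::nat set)) X I"
    and K: "\<And>s. K s \<subseteq> I" and fin: "\<And>s. finite (K s)" and disj: "disjoint_family K"
    and dep: "\<And>s x. \<Phi> s (restrict x (K s)) = \<Phi> s x"
    and bnd: "\<And>s x. \<Phi> s x \<in> {0..1}"
    and ex: "\<And>s. m \<le> expectation (\<lambda>\<omega>. \<Phi> s (\<lambda>k. X k \<omega>))"
    and d: "\<delta> > 0"
  shows "AE \<omega> in M. eventually (\<lambda>t. (\<Sum>s<t. \<Phi> s (\<lambda>k. X k \<omega>)) > m * t - \<delta> * t) sequentially"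
proof -
  define B where "B t = {\<omega>\<in>space M. (\<Sum>s<t. \<Phi> s (\<lambda>k. X k \<omega>)) \<le> m * real (card {..<t}) - \<delta> * t}" for t
  have Xm: "\<And>k. k \<in> I \<Longrightarrow> X k \<in> measurable M (count_space UNIV)"
    using ind unfolding indep_vars_def by auto
  have Bev: "B t \<in> events" for t
  proof -
    let ?A = "\<Union>s<t. K s"
    have "B t = {\<omega>\<in>space M. (\<lambda>x. (\<Sum>s<t. \<Phi> s x) \<le> m * real (card {..<t}) - \<delta> * t) (\<lambda>k. X k \<omega>)}"
      by (simp add: B_def)
    also have "\<dots> \<in> events"
    proof (rule event_dep[of ?A])
      show "finite ?A" using fin by auto
      show "\<And>k. k \<in> ?A \<Longrightarrow> X k \<in> measurable M (count_space UNIV)" using Xm K by auto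
      have "\<Phi> s (restrict x ?A) = \<Phi> s x" if "s < t" for s x
      proof -
        have "\<Phi> s (restrict x ?A) = \<Phi> s (restrict (restrict x ?A) (K s))" by (rule dep[symmetric])
        also have "restrict (restrict x ?A) (K s) = restrict x (K s)"
          using that by (auto simp: restrict_def fun_eq_iff)
        also have "\<Phi> s (restrict x (K s)) = \<Phi> s x" by (rule dep)
        finally show ?thesis .
      qed
      then show "\<And>x. (\<lambda>x. (\<Sum>s<t. \<Phi> s x) \<le> m * real (card {..<t}) - \<delta> * t) (restrict x ?A) =
                       (\<lambda>x. (\<Sum>s<t. \<Phi> s x) \<le> m * real (card {..<t}) - \<delta> * t) x"
        by simp
    qed
    finally show ?thesis .
  qed
  have Bp: "prob (B t) \<le> 1 * exp (- (2 * \<delta>\<^sup>2) * real t)" for t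
  proof -
    have iv: "indep_vars (\<lambda>_. borel) (\<lambda>s \<omega>. \<Phi> s (\<lambda>k. X k \<omega>)) {..<t}"
    proof (rule indep_family[OF ind, where K=K])
      show "\<And>s x. s \<in> {..<t} \<Longrightarrow> \<Phi> s (restrict x (K s)) = \<Phi> s x" by (rule dep)
    qed (simp_all add: K fin disjoint_family_on_mono[OF subset_UNIV disj])
    have "prob (B t) \<le> exp (-2 * (\<delta> * t)\<^sup>2 / card {..<t})"
      unfolding B_def using d
      by (intro hoeff_low[OF _ iv]) (use bnd in \<open>auto simp: ex\<close>)
    then show ?thesis using exp_bound_eq[of \<delta> t] by simp
  qed
  have "AE \<omega> in M. eventually (\<lambda>t. \<omega> \<notin> B t) sequentially"
    using d by (intro bc_exp[OF Bev _ Bp]) simp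
  moreover have "AE \<omega> in M. \<omega> \<in> space M" by (rule AE_space)
  ultimately show ?thesis
  proof eventually_elim
    case (elim \<omega>)
    show ?case using elim(1)
    proof (rule eventually_mono)
      fix t assume "\<omega> \<notin> B t"
      with elim(2) show "(\<Sum>s<t. \<Phi> s (\<lambda>k. X k \<omega>)) > m * t - \<delta> * t" by (simp add: B_def)
    qed
  qed
qed

lemma hbc_up:
  fixes \<Phi> :: "nat \<Rightarrow> ('i \<Rightarrow> nat) \<Rightarrow> real" and m \<delta> :: real
  assumes ind: "indep_vars (\<lambda>_. count_space (UNIV::nat set)) X I"
    and K: "\<And>s. K s \<subseteq> I" and fin: "\<And>s. finite (K s)" and disj: "disjoint_family K"
    and dep: "\<And>s x. \<Phi> s (restrict x (K s)) = \<Phi> s x"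
    and bnd: "\<And>s x. \<Phi> s x \<in> {0..1}"
    and ex: "\<And>s. expectation (\<lambda>\<omega>. \<Phi> s (\<lambda>k. X k \<omega>)) \<le> m"
    and d: "\<delta> > 0"
  shows "AE \<omega> in M. eventually (\<lambda>t. (\<Sum>s<t. \<Phi> s (\<lambda>k. X k \<omega>)) < m * t + \<delta> * t) sequentially"
proof -
  define B where "B t = {\<omega>\<in>space M. (\<Sum>s<t. \<Phi> s (\<lambda>k. X k \<omega>)) \<ge> m * real (card {..<t}) + \<delta> * t}" for t
  have Xm: "\<And>k. k \<in> I \<Longrightarrow> X k \<in> measurable M (count_space UNIV)"
    using ind unfolding indep_vars_def by auto
  have Bev: "B t \<in> events" for t
  proof -
    let ?A = "\<Union>s<t. K s"
    have "B t = {\<omega>\<in>space M. (\<lambda>x. (\<Sum>s<t. \<Phi> s x) \<ge> m * real (card {..<t}) + \<delta> * t) (\<lambda>k. X k \<omega>)}"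
      by (simp add: B_def)
    also have "\<dots> \<in> events"
    proof (rule event_dep[of ?A])
      show "finite ?A" using fin by auto
      show "\<And>k. k \<in> ?A \<Longrightarrow> X k \<in> measurable M (count_space UNIV)" using Xm K by auto
      have "\<Phi> s (restrict x ?A) = \<Phi> s x" if "s < t" for s x
      proof -
        have "\<Phi> s (restrict x ?A) = \<Phi> s (restrict (restrict x ?A) (K s))" by (rule dep[symmetric])
        also have "restrict (restrict x ?A) (K s) = restrict x (K s)"
          using that by (auto simp: restrict_def fun_eq_iff)
        also have "\<Phi> s (restrict x (K s)) = \<Phi> s x" by (rule dep)
        finally show ?thesis .
      qed
      then show "\<And>x. (\<lambda>x. (\<Sum>s<t. \<Phi> s x) \<ge> m * real (card {..<t}) + \<delta> * t) (restrict x ?A) =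
                       (\<lambda>x. (\<Sum>s<t. \<Phi> s x) \<ge> m * real (card {..<t}) + \<delta> * t) x"
        by simp
    qed
    finally show ?thesis .
  qed
  have Bp: "prob (B t) \<le> 1 * exp (- (2 * \<delta>\<^sup>2) * real t)" for t
  proof -
    have iv: "indep_vars (\<lambda>_. borel) (\<lambda>s \<omega>. \<Phi> s (\<lambda>k. X k \<omega>)) {..<t}"
    proof (rule indep_family[OF ind, where K=K])
      show "\<And>s x. s \<in> {..<t} \<Longrightarrow> \<Phi> s (restrict x (K s)) = \<Phi> s x" by (rule dep)
    qed (simp_all add: K fin disjoint_family_on_mono[OF subset_UNIV disj])
    have "prob (B t) \<le> exp (-2 * (\<delta> * t)\<^sup>2 / card {..<t})"
      unfolding B_def using d
      by (intro hoeff_up[OF _ iv]) (use bnd in \<open>auto simp: ex\<close>)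
    then show ?thesis using exp_bound_eq[of \<delta> t] by simp
  qed
  have "AE \<omega> in M. eventually (\<lambda>t. \<omega> \<notin> B t) sequentially"
    using d by (intro bc_exp[OF Bev _ Bp]) simp
  moreover have "AE \<omega> in M. \<omega> \<in> space M" by (rule AE_space)
  ultimately show ?thesis
  proof eventually_elim
    case (elim \<omega>)
    show ?case using elim(1)
    proof (rule eventually_mono)
      fix t assume "\<omega> \<notin> B t"
      with elim(2) show "(\<Sum>s<t. \<Phi> s (\<lambda>k. X k \<omega>)) < m * t + \<delta> * t" by (simp add: B_def)
    qed
  qed
qed

end

lemma NN_agree:
  assumes "\<And>u. u < s \<Longrightarrow> x (Gen i u) = y (Gen i u) \<and> x (Label i u) = y (Label i u)"
  shows "NN x i j s = NN y i j s"
  unfolding NN_def using assms by (intro sum.cong) (auto simp: gI_def)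

lemma SS_agree:
  assumes "\<And>u. u < s \<Longrightarrow> x (Gen i u) = y (Gen i u) \<and> x (Label i u) = y (Label i u) \<and>
                           x (Gen j u) = y (Gen j u) \<and> x (Label j u) = y (Label j u)"
  shows "SS x i j s = SS y i j s"
proof (cases s)
  case (Suc s')
  have "NN x i j s' = NN y i j s'" "NN x j i s' = NN y j i s'"
    using assms Suc by (auto intro!: NN_agree)
  then show ?thesis using Suc by (simp add: SS_def)
qed (simp add: SS_def)

lemma stat_F_agree:
  assumes "\<And>u. u \<le> s \<Longrightarrow> x (Gen i u) = y (Gen i u) \<and> x (Label i u) = y (Label i u) \<and>
                           x (Gen j u) = y (Gen j u) \<and> x (Label j u) = y (Label j u)"
  shows "stat_F x i j s = stat_F y i j s"
proof -
  have "SS x i j (Suc s) = SS y i j (Suc s)" "SS x i j s = SS y i j s"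
    using assms by (auto intro!: SS_agree)
  then show ?thesis by (simp add: stat_F_eq)
qed

locale qs = prob_space M for M :: "'a measure" +
  fixes X :: "rv_idx \<Rightarrow> 'a \<Rightarrow> nat"
    and K :: nat and p :: "nat \<Rightarrow> real" and q :: real and \<epsilon> :: real
    and lam :: "nat \<Rightarrow> nat \<Rightarrow> real" and ft :: "nat \<Rightarrow> nat \<Rightarrow> real"
  assumes q: "0 \<le> q" "q \<le> 1"
    and p: "\<forall>i\<in>nodes K. 0 \<le> p i \<and> p i \<le> 1"
    and lam_sym: "\<forall>i j. lam i j = lam j i"
    and eps: "\<epsilon> > 0"
    and ft_sym: "\<forall>i j. ft i j = ft j i"
    and ft_nonneg: "\<forall>i j. ft i j \<ge> 0"
    and ft_cap: "\<forall>j\<in>nodes K. (\<Sum>i\<in>nodes K - {j}. ft i j) \<le> p j"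
    and ft_rate: "\<forall>i\<in>nodes K. \<forall>j\<in>nodes K. i \<noteq> j \<longrightarrow> lam i j + \<epsilon> \<le> q * ft i j"
    and nontriv: "\<exists>(i, j)\<in>node_pairs K. lam i j > 0"
    and indep: "indep_vars (\<lambda>_. count_space UNIV) X (rv_index K)"
    and gen: "\<forall>i\<in>nodes K. \<forall>t.
                measure M {\<omega>\<in>space M. X (Gen i t) \<omega> = 1} = p i \<and>
                measure M {\<omega>\<in>space M. X (Gen i t) \<omega> = 0} = 1 - p i"
    and label: "\<forall>i\<in>nodes K. \<forall>t. \<forall>j\<in>nodes K - {i}.
                measure M {\<omega>\<in>space M. X (Label i t) \<omega> = j} = ft i j / p i"
    and req: "\<forall>(i, j)\<in>node_pairs K. \<forall>t.
                measure M {\<omega>\<in>space M. X (Req i j t) \<omega> = 1} = lam i j \<and>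
                measure M {\<omega>\<in>space M. X (Req i j t) \<omega> = 0} = 1 - lam i j"
    and swp: "\<forall>(i, j)\<in>node_pairs K. \<forall>t n.
                measure M {\<omega>\<in>space M. X (Swp i j t n) \<omega> = 1} = q \<and>
                measure M {\<omega>\<in>space M. X (Swp i j t n) \<omega> = 0} = 1 - q"
begin

lemma Xm: "k \<in> rv_index K \<Longrightarrow> X k \<in> measurable M (count_space UNIV)"
  using indep unfolding indep_vars_def by auto

lemma evX: "k \<in> rv_index K \<Longrightarrow> {\<omega>\<in>space M. P (X k \<omega>)} \<in> events"
proof -
  assume k: "k \<in> rv_index K"
  have "{\<omega>\<in>space M. P (X k \<omega>)} = X k -` {n. P n} \<inter> space M" by auto
  also have "\<dots> \<in> events" by (rule measurable_sets[OF Xm[OF k]]) simp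
  finally show ?thesis .
qed

lemma pairD: "(i, j) \<in> node_pairs K \<Longrightarrow> i < j \<and> i \<in> nodes K \<and> j \<in> nodes K"
  by (auto simp: node_pairs_def)

lemma finite_nodes: "finite (nodes K)" by (simp add: nodes_def)
lemma finite_pairs: "finite (node_pairs K)"
  by (rule finite_subset[of _ "nodes K \<times> nodes K"]) (auto simp: node_pairs_def finite_nodes)

lemma idx: 
  "i \<in> nodes K \<Longrightarrow> Gen i s \<in> rv_index K"
  "i \<in> nodes K \<Longrightarrow> Label i s \<in> rv_index K"
  "(i, j) \<in> node_pairs K \<Longrightarrow> Req i j s \<in> rv_index K"
  "(i, j) \<in> node_pairs K \<Longrightarrow> Swp i j s n \<in> rv_index K"
  by (auto simp: rv_index_def)

lemma lam_nonneg: assumes "i \<in> nodes K" "j \<in> nodes K" "i \<noteq> j" shows "0 \<le> lam i j"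
proof (cases "i < j")
  case True
  then have "(i, j) \<in> node_pairs K" using assms by (auto simp: node_pairs_def)
  then have "lam i j = prob {\<omega>\<in>space M. X (Req i j 0) \<omega> = 1}" using req by auto
  then show ?thesis by simp
next
  case False
  then have "(j, i) \<in> node_pairs K" using assms by (auto simp: node_pairs_def)
  then have "lam j i = prob {\<omega>\<in>space M. X (Req j i 0) \<omega> = 1}" using req by auto
  then have "0 \<le> lam j i" by simp
  then show ?thesis using lam_sym by simp
qed

lemma ft_pos: assumes "i \<in> nodes K" "j \<in> nodes K" "i \<noteq> j"
  shows "0 < ft i j" "lam i j + \<epsilon> \<le> q * ft i j" "0 < q" "ft i j \<le> p i" "0 < p i"
proof -
  show r: "lam i j + \<epsilon> \<le> q * ft i j" using ft_rate assms by auto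
  have "0 < q * ft i j" using r lam_nonneg[OF assms] eps by linarith
  then show "0 < ft i j" "0 < q" using q(1) ft_nonneg
    by (metis less_eq_real_def mult_eq_0_iff)+
  have "ft j i \<le> (\<Sum>k\<in>nodes K - {i}. ft k i)"
    by (rule member_le_sum) (use assms finite_nodes ft_nonneg in auto)
  also have "\<dots> \<le> p i" using ft_cap assms by auto
  finally show "ft i j \<le> p i" using ft_sym by simp
  then show "0 < p i" using \<open>0 < ft i j\<close> by simp
qed

lemma exp_gI: assumes "i \<in> nodes K" "j \<in> nodes K" "i \<noteq> j"
  shows "expectation (\<lambda>\<omega>. real (gI (\<lambda>k. X k \<omega>) i j s)) = ft i j"
proof -
  have "expectation (\<lambda>\<omega>. real (gI (\<lambda>k. X k \<omega>) i j s)) =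
        expectation (\<lambda>\<omega>. if X (Gen i s) \<omega> = 1 \<and> X (Label i s) \<omega> = j then 1 else 0)"
    by (rule Bochner_Integration.integral_cong) (auto simp: gI_def)
  also have "\<dots> = prob {\<omega>\<in>space M. X (Gen i s) \<omega> = 1 \<and> X (Label i s) \<omega> = j}"
  proof (rule exp_ind)
    have "{\<omega>\<in>space M. X (Gen i s) \<omega> = 1 \<and> X (Label i s) \<omega> = j} =
          {\<omega>\<in>space M. X (Gen i s) \<omega> = 1} \<inter> {\<omega>\<in>space M. X (Label i s) \<omega> = j}" by auto
    also have "\<dots> \<in> events" using evX idx assms by auto
    finally show "{\<omega>\<in>space M. X (Gen i s) \<omega> = 1 \<and> X (Label i s) \<omega> = j} \<in> events" .
  qed
  also have "\<dots> = prob {\<omega>\<in>space M. X (Gen i s) \<omega> = 1} * prob {\<omega>\<in>space M. X (Label i s) \<omega> = j}"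
    using indep_two[OF indep, of "{Gen i s}" "{Label i s}" "\<lambda>x. x (Gen i s) = 1" "\<lambda>x. x (Label i s) = j"]
      idx assms by auto
  also have "\<dots> = p i * (ft i j / p i)" using gen label assms by auto
  also have "\<dots> = ft i j" using ft_pos[OF assms] by simp
  finally show ?thesis .
qed

lemma NN_lower: assumes "i \<in> nodes K" "j \<in> nodes K" "i \<noteq> j" "(\<delta>::real) > 0"
  shows "AE \<omega> in M. eventually (\<lambda>t. real (NN (\<lambda>k. X k \<omega>) i j t) > ft i j * t - \<delta> * t) sequentially"
proof -
  have "AE \<omega> in M. eventually (\<lambda>t. (\<Sum>s<t. (\<lambda>s x. real (gI x i j s)) s (\<lambda>k. X k \<omega>)) > ft i j * t - \<delta> * t) sequentially"
  proof (rule hbc_low[OF indep, where K="\<lambda>s. {Gen i s, Label i s}"])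
    show "\<And>s. {Gen i s, Label i s} \<subseteq> rv_index K" using idx assms by auto
    show "disjoint_family (\<lambda>s. {Gen i s, Label i s})" by (auto simp: disjoint_family_on_def)
    show "\<And>s. ft i j \<le> expectation (\<lambda>\<omega>. real (gI (\<lambda>k. X k \<omega>) i j s))"
      using exp_gI[OF assms(1-3)] by simp
  qed (auto simp: gI_def assms)
  then show ?thesis by (simp add: NN_def)
qed

lemma exp_req: assumes "(i, j) \<in> node_pairs K"
  shows "expectation (\<lambda>\<omega>. if X (Req i j s) \<omega> = 1 then 1 else 0 :: real) = lam i j"
proof -
  have "expectation (\<lambda>\<omega>. if X (Req i j s) \<omega> = 1 then 1 else 0 :: real) = prob {\<omega>\<in>space M. X (Req i j s) \<omega> = 1}"
    by (rule exp_ind[OF evX[OF idx(3)[OF assms]]])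
  also have "\<dots> = lam i j" using req assms by auto
  finally show ?thesis .
qed

lemma A_upper: assumes "(i, j) \<in> node_pairs K" "(\<delta>::real) > 0"
  shows "AE \<omega> in M. eventually (\<lambda>t. (\<Sum>s<t. if X (Req i j s) \<omega> = 1 then 1 else 0 :: real) < lam i j * t + \<delta> * t) sequentially"
proof -
  have "AE \<omega> in M. eventually (\<lambda>t. (\<Sum>s<t. (\<lambda>s x. if x (Req i j s) = 1 then 1 else 0 :: real) s (\<lambda>k. X k \<omega>)) < lam i j * t + \<delta> * t) sequentially"
  proof (rule hbc_up[OF indep, where K="\<lambda>s. {Req i j s}"])
    show "\<And>s. expectation (\<lambda>\<omega>. if X (Req i j s) \<omega> = 1 then 1 else 0) \<le> lam i j"
      using exp_req[OF assms(1)] by simp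
    show "\<And>s. {Req i j s} \<subseteq> rv_index K" using idx assms by auto
    show "disjoint_family (\<lambda>s. {Req i j s})" by (auto simp: disjoint_family_on_def)
  qed (auto simp: exp_req assms)
  then show ?thesis by simp
qed

lemma A_lower: assumes "(i, j) \<in> node_pairs K" "(\<delta>::real) > 0"
  shows "AE \<omega> in M. eventually (\<lambda>t. (\<Sum>s<t. if X (Req i j s) \<omega> = 1 then 1 else 0 :: real) > lam i j * t - \<delta> * t) sequentially"
proof -
  have "AE \<omega> in M. eventually (\<lambda>t. (\<Sum>s<t. (\<lambda>s x. if x (Req i j s) = 1 then 1 else 0 :: real) s (\<lambda>k. X k \<omega>)) > lam i j * t - \<delta> * t) sequentially"
  proof (rule hbc_low[OF indep, where K="\<lambda>s. {Req i j s}"])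
    show "\<And>s. lam i j \<le> expectation (\<lambda>\<omega>. if X (Req i j s) \<omega> = 1 then 1 else 0)"
      using exp_req[OF assms(1)] by simp
    show "\<And>s. {Req i j s} \<subseteq> rv_index K" using idx assms by auto
    show "disjoint_family (\<lambda>s. {Req i j s})" by (auto simp: disjoint_family_on_def)
  qed (auto simp: exp_req assms)
  then show ?thesis by simp
qed

lemma Req_le1: assumes "(i, j) \<in> node_pairs K"
  shows "AE \<omega> in M. \<forall>t. X (Req i j t) \<omega> \<le> 1"
proof -
  have "AE \<omega> in M. X (Req i j t) \<omega> \<le> 1" for t
  proof -
    have "{\<omega>\<in>space M. X (Req i j t) \<omega> \<le> 1} = {\<omega>\<in>space M. X (Req i j t) \<omega> = 0} \<union> {\<omega>\<in>space M. X (Req i j t) \<omega> = 1}"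
      by auto
    moreover have e0: "{\<omega>\<in>space M. X (Req i j t) \<omega> = 0} \<in> events" by (rule evX[OF idx(3)[OF assms]])
    moreover have e1: "{\<omega>\<in>space M. X (Req i j t) \<omega> = 1} \<in> events" by (rule evX[OF idx(3)[OF assms]])
    ultimately have "prob {\<omega>\<in>space M. X (Req i j t) \<omega> \<le> 1} = 
               prob {\<omega>\<in>space M. X (Req i j t) \<omega> = 0} + prob {\<omega>\<in>space M. X (Req i j t) \<omega> = 1}"
    proof -
      have "prob ({\<omega>\<in>space M. X (Req i j t) \<omega> = 0} \<union> {\<omega>\<in>space M. X (Req i j t) \<omega> = 1}) =
            prob {\<omega>\<in>space M. X (Req i j t) \<omega> = 0} + prob {\<omega>\<in>space M. X (Req i j t) \<omega> = 1}"
        by (rule finite_measure_Union[OF e0 e1]) auto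
      then show ?thesis using \<open>{\<omega>\<in>space M. X (Req i j t) \<omega> \<le> 1} = _\<close> by simp
    qed
    also have "\<dots> = 1" using req assms by auto
    finally have "prob {\<omega>\<in>space M. X (Req i j t) \<omega> \<le> 1} = 1" .
    from AE_prob_1[OF this] show ?thesis by auto
  qed
  then show ?thesis by (simp add: AE_all_countable)
qed

lemma R_lower: assumes pr: "(i, j) \<in> node_pairs K" and d: "(\<delta>::real) > 0"
  shows "AE \<omega> in M. eventually (\<lambda>t. real (cumR (\<lambda>k. X k \<omega>) i j (Suc t)) >
            q * real (SS (\<lambda>k. X k \<omega>) i j (Suc t)) - \<delta> * (real t + 1)) sequentially"
proof -
  have ij: "i < j" "i \<in> nodes K" "j \<in> nodes K" using pairD[OF pr] by auto
  define Wf where "Wf t x = {s\<in>{..t}. stat_F x i j s = 1}" for t x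
  define Z where "Z s x = (if x (Swp i j s 0) = 1 then 1 else 0 :: real)" for s and x :: "rv_idx \<Rightarrow> nat"
  define GA where "GA t = (Gen i ` {..t}) \<union> (Label i ` {..t}) \<union> (Gen j ` {..t}) \<union> (Label j ` {..t})" for t
  define GB where "GB t = (\<lambda>s. Swp i j s 0) ` {..t}" for t
  define Bad where "Bad t = {\<omega>\<in>space M. real (cumR (\<lambda>k. X k \<omega>) i j (Suc t)) \<le>
            q * real (SS (\<lambda>k. X k \<omega>) i j (Suc t)) - \<delta> * (real t + 1)}" for t
  define EV where "EV t V = {\<omega>\<in>space M. Wf t (\<lambda>k. X k \<omega>) = V \<and>
            (\<Sum>s\<in>V. Z s (\<lambda>k. X k \<omega>)) \<le> q * card V - \<delta> * (real t + 1)}" for t V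
  define EW where "EW t V = {\<omega>\<in>space M. Wf t (\<lambda>k. X k \<omega>) = V}" for t V
  define EQ where "EQ t V = {\<omega>\<in>space M. (\<Sum>s\<in>V. Z s (\<lambda>k. X k \<omega>)) \<le> q * card V - \<delta> * (real t + 1)}" for t V

  have cR: "real (cumR x i j (Suc t)) = (\<Sum>s\<in>Wf t x. Z s x)" for x t
  proof -
    have "cumR x i j (Suc t) = (\<Sum>s\<in>{..t}. stat_R x i j s)" by (simp add: cumR_def lessThan_Suc_atMost)
    also have "\<dots> = (\<Sum>s\<in>{..t}. if stat_F x i j s = 1 then (if x (Swp i j s 0) = 1 then 1 else 0) else 0)"
      using stat_R_eq[OF ij(1)] by (intro sum.cong) auto
    also have "\<dots> = (\<Sum>s\<in>Wf t x. (if x (Swp i j s 0) = 1 then 1 else 0))"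
      unfolding Wf_def by (rule sum.inter_filter[symmetric]) simp
    finally have "real (cumR x i j (Suc t)) = real (\<Sum>s\<in>Wf t x. (if x (Swp i j s 0) = 1 then 1 else 0))"
      by simp
    also have "\<dots> = (\<Sum>s\<in>Wf t x. Z s x)" unfolding of_nat_sum by (intro sum.cong) (auto simp: Z_def)
    finally show ?thesis .
  qed

  have cS: "SS x i j (Suc t) = card (Wf t x)" for x t
  proof -
    have "SS x i j (Suc t) = (\<Sum>s\<in>{..t}. stat_F x i j s)"
      using sum_stat_F[of x i j "Suc t"] by (simp add: lessThan_Suc_atMost)
    also have "\<dots> = (\<Sum>s\<in>{..t}. if stat_F x i j s = 1 then 1 else 0)"
    proof (intro sum.cong refl)
      fix s show "stat_F x i j s = (if stat_F x i j s = 1 then 1 else 0)"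
        using stat_F_le1[of x i j s] by auto
    qed
    also have "\<dots> = (\<Sum>s\<in>Wf t x. 1)"
      unfolding Wf_def by (rule sum.inter_filter[symmetric]) simp
    also have "\<dots> = card (Wf t x)" by simp
    finally show ?thesis .
  qed

  have FA: "stat_F (restrict x A) i j s = stat_F x i j s" if "GA t \<subseteq> A" "s \<le> t" for x A t s
  proof (rule stat_F_agree)
    fix u assume "u \<le> s"
    then have "u \<le> t" using that(2) by simp
    then have "Gen i u \<in> A" "Label i u \<in> A" "Gen j u \<in> A" "Label j u \<in> A"
      using that(1) by (auto simp: GA_def)
    then show "restrict x A (Gen i u) = x (Gen i u) \<and> restrict x A (Label i u) = x (Label i u) \<and>
          restrict x A (Gen j u) = x (Gen j u) \<and> restrict x A (Label j u) = x (Label j u)" by simp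
  qed
  have WfA: "Wf t (restrict x A) = Wf t x" if "GA t \<subseteq> A" for x A t
    unfolding Wf_def using FA[OF that] by auto
  have ZA: "Z s (restrict x A) = Z s x" if "Swp i j s 0 \<in> A" for x A s
    using that by (simp add: Z_def)

  have sub: "GA t \<subseteq> rv_index K" "GB t \<subseteq> rv_index K" "GA t \<inter> GB t = {}" "finite (GA t)" "finite (GB t)" for t
    using idx ij pr by (auto simp: GA_def GB_def)

  have EWev: "EW t V \<in> events" for t V
  proof -
    have "EW t V = {\<omega>\<in>space M. (\<lambda>x. Wf t x = V) (\<lambda>k. X k \<omega>)}" by (simp add: EW_def)
    also have "\<dots> \<in> events"
    proof (rule event_dep[of "GA t"])
      show "finite (GA t)" using sub by auto
      show "\<And>k. k \<in> GA t \<Longrightarrow> X k \<in> measurable M (count_space UNIV)" using sub(1) Xm by blast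
      fix x have "Wf t (restrict x (GA t)) = Wf t x" by (rule WfA) simp
      then show "(\<lambda>x. Wf t x = V) (restrict x (GA t)) = (\<lambda>x. Wf t x = V) x" by simp
    qed
    finally show ?thesis .
  qed

  have EVev: "EV t V \<in> events" if "V \<subseteq> {..t}" for t V
  proof -
    have "EV t V = {\<omega>\<in>space M. (\<lambda>x. Wf t x = V \<and> (\<Sum>s\<in>V. Z s x) \<le> q * card V - \<delta> * (real t + 1)) (\<lambda>k. X k \<omega>)}"
      by (simp add: EV_def)
    also have "\<dots> \<in> events"
    proof (rule event_dep[of "GA t \<union> GB t"])
      show "finite (GA t \<union> GB t)" using sub by auto
      show "\<And>k. k \<in> GA t \<union> GB t \<Longrightarrow> X k \<in> measurable M (count_space UNIV)" using sub(1,2) Xm by blast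
      fix x
      have "Wf t (restrict x (GA t \<union> GB t)) = Wf t x" by (rule WfA) auto
      moreover have "(\<Sum>s\<in>V. Z s (restrict x (GA t \<union> GB t))) = (\<Sum>s\<in>V. Z s x)"
        using that by (intro sum.cong refl ZA) (auto simp: GB_def)
      ultimately show "(\<lambda>x. Wf t x = V \<and> (\<Sum>s\<in>V. Z s x) \<le> q * card V - \<delta> * (real t + 1)) (restrict x (GA t \<union> GB t)) =
            (\<lambda>x. Wf t x = V \<and> (\<Sum>s\<in>V. Z s x) \<le> q * card V - \<delta> * (real t + 1)) x" by simp
    qed
    finally show ?thesis .
  qed

  have BadU: "Bad t = (\<Union>V\<in>Pow {..t}. EV t V)" for t
  proof (intro equalityI subsetI)
    fix \<omega> assume "\<omega> \<in> Bad t"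
    then show "\<omega> \<in> (\<Union>V\<in>Pow {..t}. EV t V)"
      by (intro UN_I[of "Wf t (\<lambda>k. X k \<omega>)"]) (auto simp: Bad_def EV_def cR cS Wf_def)
  next
    fix \<omega> assume "\<omega> \<in> (\<Union>V\<in>Pow {..t}. EV t V)"
    then show "\<omega> \<in> Bad t" by (auto simp: Bad_def EV_def cR cS)
  qed

  have EVp: "prob (EV t V) = prob (EW t V) * prob (EQ t V)" if "V \<subseteq> {..t}" for t V
  proof -
    have "prob {\<omega>\<in>space M. (\<lambda>x. Wf t x = V) (\<lambda>k. X k \<omega>) \<and>
                 (\<lambda>x. (\<Sum>s\<in>V. Z s x) \<le> q * card V - \<delta> * (real t + 1)) (\<lambda>k. X k \<omega>)} =
          prob {\<omega>\<in>space M. (\<lambda>x. Wf t x = V) (\<lambda>k. X k \<omega>)} *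
          prob {\<omega>\<in>space M. (\<lambda>x. (\<Sum>s\<in>V. Z s x) \<le> q * card V - \<delta> * (real t + 1)) (\<lambda>k. X k \<omega>)}"
    proof (rule indep_two[OF indep sub(1,2,3,4,5)])
      show "\<And>x. (Wf t (restrict x (GA t)) = V) = (Wf t x = V)" using WfA by auto
      show "\<And>x. ((\<Sum>s\<in>V. Z s (restrict x (GB t))) \<le> q * card V - \<delta> * (real t + 1)) =
                 ((\<Sum>s\<in>V. Z s x) \<le> q * card V - \<delta> * (real t + 1))"
      proof -
        fix x
        have "(\<Sum>s\<in>V. Z s (restrict x (GB t))) = (\<Sum>s\<in>V. Z s x)"
          using that by (intro sum.cong refl ZA) (auto simp: GB_def)
        then show "((\<Sum>s\<in>V. Z s (restrict x (GB t))) \<le> q * card V - \<delta> * (real t + 1)) =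
                 ((\<Sum>s\<in>V. Z s x) \<le> q * card V - \<delta> * (real t + 1))" by simp
      qed
    qed
    then show ?thesis by (simp add: EV_def EW_def EQ_def)
  qed

  have exp_swp: "expectation (\<lambda>\<omega>. Z s (\<lambda>k. X k \<omega>)) = q" for s
  proof -
    have "expectation (\<lambda>\<omega>. Z s (\<lambda>k. X k \<omega>)) = prob {\<omega>\<in>space M. X (Swp i j s 0) \<omega> = 1}"
      unfolding Z_def by (rule exp_ind[OF evX[OF idx(4)[OF pr]]])
    also have "\<dots> = q" using swp pr by auto
    finally show ?thesis .
  qed

  have EQp: "prob (EQ t V) \<le> exp (- (2 * \<delta>\<^sup>2) * (real t + 1))" if V: "V \<subseteq> {..t}" for t V
  proof (cases "V = {}")
    case True
    have "0 < \<delta> * (real t + 1)" using d by simp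
    then have "EQ t V = {}" using True by (auto simp: EQ_def)
    then show ?thesis by simp
  next
    case False
    have fin: "finite V" using V finite_subset by auto
    have iv: "indep_vars (\<lambda>_. borel) (\<lambda>s \<omega>. Z s (\<lambda>k. X k \<omega>)) V"
    proof (rule indep_family[OF indep, where K="\<lambda>s. {Swp i j s 0}"])
      show "\<And>s x. s \<in> V \<Longrightarrow> Z s (restrict x {Swp i j s 0}) = Z s x" by (simp add: Z_def)
    qed (use idx pr in \<open>auto simp: disjoint_family_on_def\<close>)
    have "prob (EQ t V) \<le> exp (-2 * (\<delta> * (real t + 1))\<^sup>2 / card V)"
      unfolding EQ_def
    proof (rule hoeff_low[OF fin iv])
      show "\<And>i \<omega>. i \<in> V \<Longrightarrow> Z i (\<lambda>k. X k \<omega>) \<in> {0..1}" by (simp add: Z_def)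
      show "\<And>i. i \<in> V \<Longrightarrow> q \<le> expectation (\<lambda>\<omega>. Z i (\<lambda>k. X k \<omega>))" using exp_swp by simp
    qed (use d in simp)
    also have "\<dots> \<le> exp (- (2 * \<delta>\<^sup>2) * (real t + 1))"
    proof -
      have c0: "0 < real (card V)" using False fin by (simp add: card_gt_0_iff)
      have "card V \<le> card {..t}" by (rule card_mono) (use V in auto)
      then have c1: "real (card V) \<le> real t + 1" by simp
      have "\<delta>\<^sup>2 * (real t + 1) * real (card V) \<le> \<delta>\<^sup>2 * (real t + 1) * (real t + 1)"
        by (rule mult_left_mono[OF c1]) simp
      then have "\<delta>\<^sup>2 * (real t + 1) \<le> (\<delta> * (real t + 1))\<^sup>2 / card V"
        using c0 by (simp add: le_divide_eq power_mult_distrib power2_eq_square mult_ac)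
      then show ?thesis by simp
    qed
    finally show ?thesis .
  qed

  have Badev: "Bad t \<in> events" for t
    unfolding BadU by (intro sets.finite_UN) (auto intro: EVev)

  have Badp: "prob (Bad t) \<le> 1 * exp (- (2 * \<delta>\<^sup>2) * real t)" for t
  proof -
    define e where "e = exp (- (2 * \<delta>\<^sup>2) * (real t + 1))"
    have "prob (Bad t) \<le> (\<Sum>V\<in>Pow {..t}. prob (EV t V))"
      unfolding BadU by (rule measure_UNION_le) (auto intro: EVev)
    also have "\<dots> \<le> (\<Sum>V\<in>Pow {..t}. prob (EW t V) * e)"
    proof (intro sum_mono)
      fix V assume "V \<in> Pow {..t}"
      then show "prob (EV t V) \<le> prob (EW t V) * e"
        using EVp EQp unfolding e_def by (auto intro!: mult_left_mono)
    qed
    also have "\<dots> = prob (\<Union>V\<in>Pow {..t}. EW t V) * e"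
    proof -
      have "prob (\<Union>V\<in>Pow {..t}. EW t V) = (\<Sum>V\<in>Pow {..t}. prob (EW t V))"
        by (rule finite_measure_finite_Union) (use EWev in \<open>auto simp: disjoint_family_on_def EW_def\<close>)
      then show ?thesis by (simp add: sum_distrib_right)
    qed
    also have "\<dots> \<le> e" by (rule mult_left_le_one_le) (auto simp: e_def)
    also have "e \<le> exp (- (2 * \<delta>\<^sup>2) * real t)" unfolding e_def
      by (simp add: algebra_simps)
    finally show ?thesis by simp
  qed

  have "AE \<omega> in M. eventually (\<lambda>t. \<omega> \<notin> Bad t) sequentially"
    using d by (intro bc_exp[OF Badev _ Badp]) simp
  moreover have "AE \<omega> in M. \<omega> \<in> space M" by (rule AE_space)
  ultimately show ?thesis
  proof eventually_elim
    case (elim \<omega>)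
    show ?case using elim(1)
    proof (rule eventually_mono)
      fix t assume "\<omega> \<notin> Bad t"
      with elim(2) show "real (cumR (\<lambda>k. X k \<omega>) i j (Suc t)) >
            q * real (SS (\<lambda>k. X k \<omega>) i j (Suc t)) - \<delta> * (real t + 1)" by (simp add: Bad_def)
    qed
  qed
qed

lemma req_A_pair: "(i, j) \<in> node_pairs K \<Longrightarrow> req_A x i j s = x (Req i j s)"
  using pairD[of i j] by (simp add: req_A_def min_def max_def)

lemma pair_step:
  fixes a b cR cA t lamij ftij \<delta> :: real
  assumes ha: "a > ftij * t - \<delta> * t" and hb: "b > ftij * t - \<delta> * t"
    and hR: "cR > q * min a b - \<delta> * (t + 1)" and hA: "cA < lamij * t + \<delta> * t"
    and rate: "lamij + \<epsilon> \<le> q * ftij" and de: "\<epsilon> = 4 * \<delta>" and d: "\<delta> > 0" and t1: "t \<ge> 1"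
  shows "cA < cR"
proof -
  have m: "min a b \<ge> ftij * t - \<delta> * t" using ha hb by simp
  have h1: "q * min a b \<ge> q * (ftij * t - \<delta> * t)" by (rule mult_left_mono[OF m q(1)])
  have h3: "(lamij + \<epsilon>) * t \<le> q * ftij * t" by (rule mult_right_mono[OF rate]) (use t1 in simp)
  have h4: "q * (\<delta> * t) \<le> 1 * (\<delta> * t)" by (rule mult_right_mono[OF q(2)]) (use d t1 in simp)
  have h5: "\<delta> * 1 \<le> \<delta> * t" by (rule mult_left_mono[OF t1]) (use d in simp)
  have "q * (ftij * t - \<delta> * t) = q * ftij * t - q * (\<delta> * t)" by (simp add: algebra_simps)
  then show ?thesis using h1 h3 h4 h5 hR hA de by (simp add: algebra_simps)
qed

theorem main: "AE \<omega> in M. (\<lambda>T. avg_latency K (\<lambda>k. X k \<omega>) T) \<longlonglongrightarrow> 1"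
proof -
  obtain i0 j0 where p0: "(i0, j0) \<in> node_pairs K" "lam i0 j0 > 0" using nontriv by auto
  define \<delta> where "\<delta> = \<epsilon> / 4"
  have dpos: "\<delta> > 0" using eps by (simp add: \<delta>_def)
  define good where "good \<omega> i j \<longleftrightarrow>
     (eventually (\<lambda>t. real (NN (\<lambda>k. X k \<omega>) i j t) > ft i j * t - \<delta> * t \<and>
                      real (NN (\<lambda>k. X k \<omega>) j i t) > ft j i * t - \<delta> * t \<and>
                      real (cumR (\<lambda>k. X k \<omega>) i j (Suc t)) > q * real (SS (\<lambda>k. X k \<omega>) i j (Suc t)) - \<delta> * (real t + 1) \<and>
                      (\<Sum>s<t. if X (Req i j s) \<omega> = 1 then 1 else 0 :: real) < lam i j * t + \<delta> * t) sequentially) \<and>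
     (\<forall>t. X (Req i j t) \<omega> \<le> 1)" for \<omega> i j
  have "\<forall>pq\<in>node_pairs K. AE \<omega> in M. good \<omega> (fst pq) (snd pq)"
  proof
    fix pq assume "pq \<in> node_pairs K"
    then obtain i j where pq: "pq = (i, j)" and pr: "(i, j) \<in> node_pairs K" by (cases pq) auto
    have ij: "i < j" "i \<in> nodes K" "j \<in> nodes K" using pairD[OF pr] by auto
    have a1: "AE \<omega> in M. eventually (\<lambda>t. real (NN (\<lambda>k. X k \<omega>) i j t) > ft i j * t - \<delta> * t) sequentially"
      by (rule NN_lower[OF ij(2,3) _ dpos]) (use ij in simp)
    have a2: "AE \<omega> in M. eventually (\<lambda>t. real (NN (\<lambda>k. X k \<omega>) j i t) > ft j i * t - \<delta> * t) sequentially"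
      by (rule NN_lower[OF ij(3,2) _ dpos]) (use ij in simp)
    note a3 = R_lower[OF pr dpos] and a4 = A_upper[OF pr dpos] and a5 = Req_le1[OF pr]
    have "AE \<omega> in M. good \<omega> i j"
      using a1 a2 a3 a4 a5
    proof eventually_elim
      case (elim \<omega>)
      then show ?case unfolding good_def by (auto intro!: eventually_conj)
    qed
    then show "AE \<omega> in M. good \<omega> (fst pq) (snd pq)" by (simp add: pq)
  qed
  then have AEg: "AE \<omega> in M. \<forall>pq\<in>node_pairs K. good \<omega> (fst pq) (snd pq)"
    by (simp add: AE_finite_all[OF finite_pairs])
  have AE2: "AE \<omega> in M. eventually (\<lambda>t. (\<Sum>s<t. if X (Req i0 j0 s) \<omega> = 1 then 1 else 0 :: real) >
                 lam i0 j0 * t - lam i0 j0 / 2 * t) sequentially"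
    by (rule A_lower[OF p0(1)]) (use p0(2) in simp)
  show ?thesis using AEg AE2
  proof eventually_elim
    case (elim \<omega>)
    define x where "x = (\<lambda>k. X k \<omega>)"
    have good: "\<And>i j. (i, j) \<in> node_pairs K \<Longrightarrow> good \<omega> i j" using elim(1) by force
    have ind: "real (req_A x i j s) = (if X (Req i j s) \<omega> = 1 then 1 else 0)"
      if "(i, j) \<in> node_pairs K" for i j s
    proof -
      have "X (Req i j s) \<omega> \<le> 1" using good[OF that] by (simp add: good_def)
      then show ?thesis using req_A_pair[OF that, of x s] by (auto simp: x_def)
    qed
    have evp: "eventually (\<lambda>t. fst (stat_UE x i j (Suc t)) = req_A x i j t) sequentially"
      if pr: "(i, j) \<in> node_pairs K" for i j
    proof -
      have ij: "i < j" "i \<in> nodes K" "j \<in> nodes K" using pairD[OF pr] by auto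
      have rate: "lam i j + \<epsilon> \<le> q * ft i j" using ft_pos(2)[OF ij(2,3)] ij by simp
      have g: "eventually (\<lambda>t. real (NN x i j t) > ft i j * t - \<delta> * t \<and>
                      real (NN x j i t) > ft j i * t - \<delta> * t \<and>
                      real (cumR x i j (Suc t)) > q * real (SS x i j (Suc t)) - \<delta> * (real t + 1) \<and>
                      (\<Sum>s<t. if X (Req i j s) \<omega> = 1 then 1 else 0 :: real) < lam i j * t + \<delta> * t) sequentially"
        using good[OF pr] by (simp add: good_def x_def)
      moreover have "eventually (\<lambda>t. t \<ge> 1) sequentially" by (rule eventually_ge_at_top)
      ultimately show ?thesis
      proof eventually_elim
        case (elim t)
        have cA: "real (cumA x i j t) = (\<Sum>s<t. if X (Req i j s) \<omega> = 1 then 1 else 0 :: real)"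
          unfolding cumA_def of_nat_sum using ind[OF pr] by simp
        have SSm: "real (SS x i j (Suc t)) = min (real (NN x i j t)) (real (NN x j i t))"
          by (simp add: SS_def)
        have "real (cumA x i j t) < real (cumR x i j (Suc t))"
        proof (rule pair_step[where a="real (NN x i j t)" and b="real (NN x j i t)" and ftij="ft i j"
                 and lamij="lam i j" and \<delta>=\<delta> and t="real t"])
          show "real (NN x j i t) > ft i j * real t - \<delta> * real t" using elim ft_sym by metis
        qed (use elim cA SSm rate dpos in \<open>auto simp: \<delta>_def\<close>)
        then show ?case by (intro UE_fst_good) simp
      qed
    qed
    have "eventually (\<lambda>t. \<forall>pq\<in>node_pairs K. fst (stat_UE x (fst pq) (snd pq) (Suc t)) = req_A x (fst pq) (snd pq) t) sequentially"
      using evp by (intro eventually_ball_finite finite_pairs) auto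
    then obtain T0 where T0: "\<And>t. t \<ge> T0 \<Longrightarrow> \<forall>pq\<in>node_pairs K. fst (stat_UE x (fst pq) (snd pq) (Suc t)) = req_A x (fst pq) (snd pq) t"
      by (auto simp: eventually_sequentially)
    define u where "u t = (\<Sum>(i, j)\<in>node_pairs K. fst (stat_UE x i j t))" for t
    define a where "a t = (\<Sum>(i, j)\<in>node_pairs K. req_A x i j t)" for t
    have lim: "(\<lambda>T. real (\<Sum>t<T. u t) / real (\<Sum>t<T. a t)) \<longlonglongrightarrow> 1"
    proof (rule final_limit[where B="real (card (node_pairs K))"])
      show "u (Suc t) = a t" if "T0 \<le> t" for t
        unfolding u_def a_def
      proof (rule sum.cong[OF refl])
        fix pq assume pq: "pq \<in> node_pairs K"
        obtain i j where pqe: "pq = (i, j)" by (cases pq)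
        have "fst (stat_UE x (fst pq) (snd pq) (Suc t)) = req_A x (fst pq) (snd pq) t"
          using T0[OF that] pq by blast
        then show "(case pq of (i, j) \<Rightarrow> fst (stat_UE x i j (Suc t))) = (case pq of (i, j) \<Rightarrow> req_A x i j t)"
          unfolding pqe by (simp del: stat_UE.simps)
      qed
      show "\<And>t. real (a t) \<le> real (card (node_pairs K))"
      proof -
        fix t
        have "a t \<le> (\<Sum>pq\<in>node_pairs K. 1)" unfolding a_def
        proof (rule sum_mono)
          fix pq assume "pq \<in> node_pairs K"
          then show "(case pq of (i, j) \<Rightarrow> req_A x i j t) \<le> 1"
            using ind[of "fst pq" "snd pq" t] by (cases pq) (auto split: if_splits)
        qed
        then show "real (a t) \<le> real (card (node_pairs K))" by simp
      qed
      have f: "filterlim (\<lambda>T. lam i0 j0 / 2 * real T) at_top sequentially"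
        by (rule filterlim_tendsto_pos_mult_at_top[OF tendsto_const _ filterlim_real_sequentially]) (use p0 in simp)
      show "filterlim (\<lambda>T. real (\<Sum>t<T. a t)) at_top sequentially"
      proof (rule filterlim_at_top_mono[OF f])
        show "eventually (\<lambda>T. lam i0 j0 / 2 * real T \<le> real (\<Sum>t<T. a t)) sequentially"
          using elim(2)
        proof (rule eventually_mono)
          fix T assume h: "(\<Sum>s<T. if X (Req i0 j0 s) \<omega> = 1 then 1 else 0 :: real) > lam i0 j0 * T - lam i0 j0 / 2 * T"
          have "(\<Sum>s<T. if X (Req i0 j0 s) \<omega> = 1 then 1 else 0 :: real) = (\<Sum>s<T. real (req_A x i0 j0 s))"
            using ind[OF p0(1)] by simp
          also have "\<dots> \<le> (\<Sum>s<T. real (a s))"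
          proof (rule sum_mono)
            fix s
            have "req_A x i0 j0 s \<le> a s" unfolding a_def
              using member_le_sum[of "(i0, j0)" "node_pairs K" "\<lambda>pq. case pq of (i, j) \<Rightarrow> req_A x i j s"]
                p0(1) finite_pairs by simp
            then show "real (req_A x i0 j0 s) \<le> real (a s)" by simp
          qed
          finally have h2: "(\<Sum>s<T. if X (Req i0 j0 s) \<omega> = 1 then 1 else 0 :: real) \<le> real (\<Sum>t<T. a t)"
            by simp
          have "lam i0 j0 * real T - lam i0 j0 / 2 * real T = lam i0 j0 / 2 * real T" by simp
          then show "lam i0 j0 / 2 * real T \<le> real (\<Sum>t<T. a t)" using h h2 by linarith
        qed
      qed
    qed
    then show ?case unfolding avg_latency_def u_def a_def x_def .
  qed
qed

end

theorem theorem3: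
  fixes M :: "'a measure"
    and X :: "rv_idx \<Rightarrow> 'a \<Rightarrow> nat"
    and K :: nat and p :: "nat \<Rightarrow> real" and q :: real and \<epsilon> :: real
    and lam :: "nat \<Rightarrow> nat \<Rightarrow> real" and ft :: "nat \<Rightarrow> nat \<Rightarrow> real"
  assumes P: "prob_space M"
    and q: "0 \<le> q" "q \<le> 1"
    and p: "\<forall>i\<in>nodes K. 0 \<le> p i \<and> p i \<le> 1"
    and lam_sym: "\<forall>i j. lam i j = lam j i"
    and eps: "\<epsilon> > 0"
    and inLam: "in_Lambda K p q (\<lambda>i j. lam i j + \<epsilon>)"
    and ft_sym: "\<forall>i j. ft i j = ft j i"
    and ft_nonneg: "\<forall>i j. ft i j \<ge> 0"
    and ft_cap: "\<forall>j\<in>nodes K. (\<Sum>i\<in>nodes K - {j}. ft i j) \<le> p j"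
    and ft_rate: "\<forall>i\<in>nodes K. \<forall>j\<in>nodes K. i \<noteq> j \<longrightarrow> lam i j + \<epsilon> \<le> q * ft i j"
    and nontriv: "\<exists>(i, j)\<in>node_pairs K. lam i j > 0"
    and indep: "prob_space.indep_vars M (\<lambda>_. count_space UNIV) X (rv_index K)"
    and gen: "\<forall>i\<in>nodes K. \<forall>t.
                measure M {\<omega>\<in>space M. X (Gen i t) \<omega> = 1} = p i \<and>
                measure M {\<omega>\<in>space M. X (Gen i t) \<omega> = 0} = 1 - p i"
    and label: "\<forall>i\<in>nodes K. \<forall>t. \<forall>j\<in>nodes K - {i}.
                measure M {\<omega>\<in>space M. X (Label i t) \<omega> = j} = ft i j / p i"
    and req: "\<forall>(i, j)\<in>node_pairs K. \<forall>t.
                measure M {\<omega>\<in>space M. X (Req i j t) \<omega> = 1} = lam i j \<and>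
                measure M {\<omega>\<in>space M. X (Req i j t) \<omega> = 0} = 1 - lam i j"
    and swp: "\<forall>(i, j)\<in>node_pairs K. \<forall>t n.
                measure M {\<omega>\<in>space M. X (Swp i j t n) \<omega> = 1} = q \<and>
                measure M {\<omega>\<in>space M. X (Swp i j t n) \<omega> = 0} = 1 - q"
  shows "AE \<omega> in M. (\<lambda>T. avg_latency K (\<lambda>k. X k \<omega>) T) \<longlonglongrightarrow> 1"
  proof -
  interpret qs M X K p q \<epsilon> lam ft
    using P q p lam_sym eps ft_sym ft_nonneg ft_cap ft_rate nontriv indep gen label req swp
    by (simp add: qs_def qs_axioms_def)
  show ?thesis by (rule main)
qed

end
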